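(* Consider a network (as in the context) operated under a $w$-WMW policy, and let $C$ be its sensitivity constant, i.e., a constant such that for every arrival function $A$, every corresponding queue process $Q$, every $\lambda\succeq0$ and every fluid solution $q$ for $\lambda$ with $q(0)=Q(0)$, one has $\|Q(k)-q(k)\|_2\le C(1+\|\lambda\|+\max_{t<k}\|\sum_{\tau=0}^t(A(\tau)-\lambda)\|_2)$ for all $k\in\mathbb{Z}_+$. Fix an arrival function $A:\mathbb{Z}_+\to\mathbb{R}_+^n$ and $q_0\in\mathbb{R}_+^n$. For $r>0$ let $Q^r(\cdot)$ be the queue length process driven by $A(\cdot)$ with $Q^r(0)=rq_0$, and let $\hat q^r(t)=Q^r(\lfloor rt\rfloor)/r$ for $t\ge0$. Let $q(\cdot)$ be a fluid solution for some $\lambda\in\mathbb{R}_+^n$ with $q(0)=q_0$. Then for any $T>0$, $$\sup_{t\le T}\|\hat q^r(t)-q(t)\|_2\le \frac{C}{r}\max_{t<rT}\Big\|\sum_{\tau=0}^t\big(A(\tau)-\lambda\big)\Big\|_2+O(1/r),$$ where $O(1/r)$ denotes a term bounded by $K/r$ for a constant $K$ not depending on $r$.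
   Context: A network consists of $n$ queues, a routing matrix $R\in\mathbb{R}^{n\times n}$ with nonnegative entries, and a finite set $\mathcal{S}\subset\mathbb{R}_+^n$ of service vectors; standing assumption: for every $\mu\in\mathcal{S}$ and every $i$, the vector obtained from $\mu$ by setting its $i$-th entry to zero belongs to $\mathcal{S}$. A queue length process driven by $A:\mathbb{Z}_+\to\mathbb{R}_+^n$ evolves by $Q(t+1)=Q(t)+A(t)+(R-I)\min(\mu(t),Q(t))$ (componentwise min), where $\mu(t)\in\mathcal{S}$ is the chosen service vector. For $w\in\mathbb{R}_{++}^n$, $W=\mathrm{diag}(w)$, $\mathcal{S}_w(x)=\arg\max_{\mu\in\mathcal{S}}x^TW(I-R)\mu$; the $w$-WMW policy chooses $\mu(t)\in\mathcal{S}_w(Q(t))$ arbitrarily. A fluid solution for $\lambda\in\mathbb{R}_+^n$ (weights $w$) is an absolutely continuous $q:\mathbb{R}_+\to\mathbb{R}_+^n$ for which there exist $s_\mu:\mathbb{R}_+\to[0,1]$ ($\mu\in\mathcal{S}$) and $y:\mathbb{R}_+\to\mathbb{R}_+^n$ with, for a.e. $t$: $\dot q(t)=\lambda+(R-I)(\sum_\mu s_\mu(t)\mu-y(t))$, $\sum_\mu s_\mu(t)=1$, $y_i(t)\le\sum_\mu s_\mu(t)\mu_i$, $q_i(t)>0\Rightarrow y_i(t)=0$, and $\mu\notin\mathcal{S}_w(q(t))\Rightarrow s_\mu(t)=0$. *)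

theory Defs
  imports "HOL-Analysis.Analysis"
begin

text \<open>Vectors in R^n are modelled as real^'n for a finite index type 'n; n x n matrices as real^'n^'n.\<close>

definition nonneg_vec :: "real^'n \<Rightarrow> bool" where
  "nonneg_vec x \<longleftrightarrow> (\<forall>i. 0 \<le> x $ i)"

definition diagm :: "real^'n \<Rightarrow> real^'n^'n" where
  "diagm w = (\<chi> i j. if i = j then w $ i else 0)"

definition vmin :: "real^'n \<Rightarrow> real^'n \<Rightarrow> real^'n" where
  "vmin x y = (\<chi> i. min (x $ i) (y $ i))"

text \<open>Standing assumptions on the network data (R, S).\<close>
definition network :: "real^'n^'n \<Rightarrow> (real^'n) set \<Rightarrow> bool" where
  "network R S \<longleftrightarrow> (\<forall>i j. 0 \<le> R $ i $ j) \<and> finite S \<and> (\<forall>\<mu>\<in>S. nonneg_vec \<mu>) \<and>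
     (\<forall>\<mu>\<in>S. \<forall>i. (\<chi> j. if j = i then 0 else \<mu> $ j) \<in> S)"

text \<open>S_w(x) = argmax over mu in S of x^T W (I - R) mu, with W = diag w.\<close>
definition Sw :: "real^'n^'n \<Rightarrow> (real^'n) set \<Rightarrow> real^'n \<Rightarrow> real^'n \<Rightarrow> (real^'n) set" where
  "Sw R S w x = {\<mu>\<in>S. \<forall>\<nu>\<in>S.
      x \<bullet> (diagm w *v ((mat 1 - R) *v \<nu>)) \<le> x \<bullet> (diagm w *v ((mat 1 - R) *v \<mu>))}"

text \<open>Q is a queue length process driven by A under the w-WMW policy (service vector chosen
  arbitrarily in S_w(Q(t)) at each step).\<close>
definition wmw_process :: "real^'n^'n \<Rightarrow> (real^'n) set \<Rightarrow> real^'n \<Rightarrow>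
    (nat \<Rightarrow> real^'n) \<Rightarrow> (nat \<Rightarrow> real^'n) \<Rightarrow> bool" where
  "wmw_process R S w A Q \<longleftrightarrow>
     (\<forall>t. \<exists>\<mu>\<in>Sw R S w (Q t). Q (Suc t) = Q t + A t + (R - mat 1) *v vmin \<mu> (Q t))"

text \<open>Absolute continuity of f on [0,T].\<close>
definition abs_cont_on_interval :: "(real \<Rightarrow> real^'n) \<Rightarrow> real \<Rightarrow> bool" where
  "abs_cont_on_interval f T \<longleftrightarrow>
     (\<forall>\<epsilon>>0. \<exists>\<delta>>0. \<forall>(m::nat) (a::nat \<Rightarrow> real) b.
        (\<forall>i<m. 0 \<le> a i \<and> a i \<le> b i \<and> b i \<le> T) \<and>
        (\<forall>i<m. \<forall>j<m. i \<noteq> j \<longrightarrow> b i \<le> a j \<or> b j \<le> a i) \<and>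
        (\<Sum>i<m. b i - a i) < \<delta>
        \<longrightarrow> (\<Sum>i<m. norm (f (b i) - f (a i))) < \<epsilon>)"

text \<open>Absolute continuity on R_+ (i.e. on every compact interval [0,T]).\<close>
definition abs_cont_nonneg :: "(real \<Rightarrow> real^'n) \<Rightarrow> bool" where
  "abs_cont_nonneg f \<longleftrightarrow> (\<forall>T\<ge>0. abs_cont_on_interval f T)"

text \<open>Fluid solution for arrival rate lam (weights w).\<close>
definition fluid_solution :: "real^'n^'n \<Rightarrow> (real^'n) set \<Rightarrow> real^'n \<Rightarrow> real^'n \<Rightarrow>
    (real \<Rightarrow> real^'n) \<Rightarrow> bool" where
  "fluid_solution R S w lam q \<longleftrightarrow>
     abs_cont_nonneg q \<and> (\<forall>t\<ge>0. nonneg_vec (q t)) \<and>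
     (\<exists>(s :: real^'n \<Rightarrow> real \<Rightarrow> real) (y :: real \<Rightarrow> real^'n).
        (\<forall>\<mu>\<in>S. \<forall>t\<ge>0. 0 \<le> s \<mu> t \<and> s \<mu> t \<le> 1) \<and>
        (\<forall>t\<ge>0. nonneg_vec (y t)) \<and>
        (\<exists>N. N \<in> null_sets lborel \<and> (\<forall>t. t \<ge> 0 \<and> t \<notin> N \<longrightarrow>
           (q has_vector_derivative
              (lam + (R - mat 1) *v ((\<Sum>\<mu>\<in>S. s \<mu> t *\<^sub>R \<mu>) - y t))) (at t within {0..}) \<and>
           (\<Sum>\<mu>\<in>S. s \<mu> t) = 1 \<and>
           (\<forall>i. y t $ i \<le> (\<Sum>\<mu>\<in>S. s \<mu> t * \<mu> $ i)) \<and>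
           (\<forall>i. q t $ i > 0 \<longrightarrow> y t $ i = 0) \<and>
           (\<forall>\<mu>\<in>S. \<mu> \<notin> Sw R S w (q t) \<longrightarrow> s \<mu> t = 0))))"

text \<open>max_{t < x} || sum_{tau=0}^t (A tau - lam) ||_2, over natural t; taken to be 0 if there
  is no such t (all terms are nonnegative, so inserting 0 does not change a nonempty max).\<close>
definition maxdev :: "(nat \<Rightarrow> real^'n) \<Rightarrow> real^'n \<Rightarrow> real \<Rightarrow> real" where
  "maxdev A lam x = Max (insert 0 {norm (\<Sum>\<tau>\<le>t. A \<tau> - lam) | t::nat. real t < x})"

text \<open>C is a sensitivity constant of the network under the w-WMW policy.\<close>
definition sensitivity_const :: "real^'n^'n \<Rightarrow> (real^'n) set \<Rightarrow> real^'n \<Rightarrow> real \<Rightarrow> bool" where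
  "sensitivity_const R S w C \<longleftrightarrow>
     (\<forall>A Q lam q. (\<forall>t. nonneg_vec (A t)) \<longrightarrow> wmw_process R S w A Q \<longrightarrow> nonneg_vec lam \<longrightarrow>
        fluid_solution R S w lam q \<longrightarrow> q 0 = Q 0 \<longrightarrow>
        (\<forall>k::nat. norm (Q k - q (real k)) \<le> C * (1 + norm lam + maxdev A lam (real k))))"

end

theory Submission
  imports Defs
begin
lemma null_affine:
  fixes N :: "real set"
  assumes "N \<in> null_sets lborel" "c > 0"
  shows "{u. a + c*u \<in> N} \<in> null_sets lborel"
proof -
  have Nb: "N \<in> sets borel" using assms(1) by auto
  have m: "{u. a + c*u \<in> N} \<in> sets borel"
  proof -
    have "(\<lambda>u. a + c*u) \<in> borel_measurable borel" by measurable
    from measurable_sets[OF this Nb] show ?thesis by (simp add: vimage_def)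
  qed
  have "AE x in lborel. x \<notin> N" using assms(1) AE_not_in by blast
  then have "AE u in lborel. a + c*u \<notin> N"
    using AE_borel_affine[of c "\<lambda>x. x \<notin> N" a] assms(2) Nb by (simp add: pred_def)
  then show ?thesis using AE_iff_null_sets[of "{u. a + c*u \<in> N}" lborel] m by simp
qed

lemma Sw_scale:
  assumes "c > 0"
  shows "Sw R S w (c *\<^sub>R x) = Sw R S w x"
  using assms by (simp add: Sw_def inner_scaleR_left mult_le_cancel_left_pos)

lemma abs_cont_affine:
  assumes ac: "abs_cont_nonneg q" and a: "a \<ge> 0" and c: "c > 0"
  shows "abs_cont_nonneg (\<lambda>u. (1/c) *\<^sub>R q (a + c*u))"
  unfolding abs_cont_nonneg_def abs_cont_on_interval_def
proof (intro allI impI)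
  fix T \<epsilon> :: real assume T: "0 \<le> T" and e: "0 < \<epsilon>"
  have "abs_cont_on_interval q (a + c*T)" using ac a c T unfolding abs_cont_nonneg_def by simp
  note ac1 = this[unfolded abs_cont_on_interval_def, rule_format]
  have ce: "c*\<epsilon> > 0" using c e by simp
  from ac1[OF ce] obtain \<delta> where d: "\<delta> > 0" and P0: "\<forall>(m::nat) (aa::nat\<Rightarrow>real) b. (\<forall>i<m. 0 \<le> aa i \<and> aa i \<le> b i \<and> b i \<le> a + c*T) \<and>
        (\<forall>i<m. \<forall>j<m. i \<noteq> j \<longrightarrow> b i \<le> aa j \<or> b j \<le> aa i) \<and>
        (\<Sum>i<m. b i - aa i) < \<delta>
        \<longrightarrow> (\<Sum>i<m. norm (q (b i) - q (aa i))) < c*\<epsilon>"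
    by blast
  note P = P0[rule_format]
  show "\<exists>\<delta>>0. \<forall>(m::nat) (aa::nat \<Rightarrow> real) b.
        (\<forall>i<m. 0 \<le> aa i \<and> aa i \<le> b i \<and> b i \<le> T) \<and>
        (\<forall>i<m. \<forall>j<m. i \<noteq> j \<longrightarrow> b i \<le> aa j \<or> b j \<le> aa i) \<and>
        (\<Sum>i<m. b i - aa i) < \<delta>
        \<longrightarrow> (\<Sum>i<m. norm ((1/c) *\<^sub>R q (a + c * b i) - (1/c) *\<^sub>R q (a + c * aa i))) < \<epsilon>"
  proof (intro exI[of _ "\<delta>/c"] conjI allI impI)
    show "\<delta>/c > 0" using d c by simp
    fix m :: nat and aa b :: "nat \<Rightarrow> real"
    assume h: "(\<forall>i<m. 0 \<le> aa i \<and> aa i \<le> b i \<and> b i \<le> T) \<and>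
        (\<forall>i<m. \<forall>j<m. i \<noteq> j \<longrightarrow> b i \<le> aa j \<or> b j \<le> aa i) \<and>
        (\<Sum>i<m. b i - aa i) < \<delta>/c"
    have s1: "(\<Sum>i<m. (a + c * b i) - (a + c * aa i)) = c * (\<Sum>i<m. b i - aa i)"
      by (simp add: sum_distrib_left algebra_simps)
    have "(\<Sum>i<m. norm (q (a + c * b i) - q (a + c * aa i))) < c*\<epsilon>"
    proof (rule P, intro conjI allI impI)
      fix i assume i: "i < m"
      show "0 \<le> a + c * aa i" using h i a c by simp
      show "a + c * aa i \<le> a + c * b i" using h i c by simp
      show "a + c * b i \<le> a + c * T" using h i c by simp
    next
      fix i j assume "i < m" "j < m" "i \<noteq> j"
      then show "a + c * b i \<le> a + c * aa j \<or> a + c * b j \<le> a + c * aa i"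
        using h c by (smt (verit) mult_left_mono)
    next
      have "c * (\<Sum>i<m. b i - aa i) < c * (\<delta>/c)" using h c by (intro mult_strict_left_mono) auto
      then show "(\<Sum>i<m. (a + c * b i) - (a + c * aa i)) < \<delta>" using s1 c by simp
    qed
    moreover have "(\<Sum>i<m. norm ((1/c) *\<^sub>R q (a + c * b i) - (1/c) *\<^sub>R q (a + c * aa i)))
        = (\<Sum>i<m. norm (q (a + c * b i) - q (a + c * aa i))) / c"
      using c by (simp add: sum_divide_distrib flip: scaleR_diff_right)
    ultimately show "(\<Sum>i<m. norm ((1/c) *\<^sub>R q (a + c * b i) - (1/c) *\<^sub>R q (a + c * aa i))) < \<epsilon>"
      using c by (simp add: pos_divide_less_eq mult.commute)
  qed
qed


lemma fluid_affine:
  assumes fs: "fluid_solution R S w lam q" and a: "a \<ge> 0" and c: "c > 0"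
  shows "fluid_solution R S w lam (\<lambda>u. (1/c) *\<^sub>R q (a + c*u))"
proof -
  from fs have ac: "abs_cont_nonneg q" and nn: "\<forall>t\<ge>0. nonneg_vec (q t)"
    unfolding fluid_solution_def by auto
  note E = fs[unfolded fluid_solution_def, THEN conjunct2, THEN conjunct2]
  from E obtain s y where
    s01: "\<forall>\<mu>\<in>S. \<forall>t\<ge>0. 0 \<le> s \<mu> t \<and> s \<mu> t \<le> 1" and
    ynn: "\<forall>t\<ge>0. nonneg_vec (y t)" and
    E2: "\<exists>N. N \<in> null_sets lborel \<and> (\<forall>t. t \<ge> 0 \<and> t \<notin> N \<longrightarrow>
           (q has_vector_derivative
              (lam + (R - mat 1) *v ((\<Sum>\<mu>\<in>S. s \<mu> t *\<^sub>R \<mu>) - y t))) (at t within {0..}) \<and>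
           (\<Sum>\<mu>\<in>S. s \<mu> t) = 1 \<and>
           (\<forall>i. y t $ i \<le> (\<Sum>\<mu>\<in>S. s \<mu> t * \<mu> $ i)) \<and>
           (\<forall>i. q t $ i > 0 \<longrightarrow> y t $ i = 0) \<and>
           (\<forall>\<mu>\<in>S. \<mu> \<notin> Sw R S w (q t) \<longrightarrow> s \<mu> t = 0))"
    by blast
  from E2 obtain N where N: "N \<in> null_sets lborel" and
    H0: "\<forall>t. t \<ge> 0 \<and> t \<notin> N \<longrightarrow>
           (q has_vector_derivative
              (lam + (R - mat 1) *v ((\<Sum>\<mu>\<in>S. s \<mu> t *\<^sub>R \<mu>) - y t))) (at t within {0..}) \<and>
           (\<Sum>\<mu>\<in>S. s \<mu> t) = 1 \<and>
           (\<forall>i. y t $ i \<le> (\<Sum>\<mu>\<in>S. s \<mu> t * \<mu> $ i)) \<and>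
           (\<forall>i. q t $ i > 0 \<longrightarrow> y t $ i = 0) \<and>
           (\<forall>\<mu>\<in>S. \<mu> \<notin> Sw R S w (q t) \<longrightarrow> s \<mu> t = 0)"
    by blast
  note H = H0[rule_format]
  define p where "p = (\<lambda>u. (1/c) *\<^sub>R q (a + c*u))"
  define s' where "s' = (\<lambda>\<mu> u. s \<mu> (a + c*u))"
  define y' where "y' = (\<lambda>u. y (a + c*u))"
  define N' where "N' = {u. a + c*u \<in> N}"
  have "abs_cont_nonneg p" unfolding p_def by (rule abs_cont_affine[OF ac a c])
  moreover have "\<forall>t\<ge>0. nonneg_vec (p t)"
    using nn a c unfolding p_def nonneg_vec_def by simp
  moreover have "\<forall>\<mu>\<in>S. \<forall>t\<ge>0. 0 \<le> s' \<mu> t \<and> s' \<mu> t \<le> 1"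
    using s01 a c unfolding s'_def by (metis add_nonneg_nonneg mult_nonneg_nonneg less_imp_le)
  moreover have "\<forall>t\<ge>0. nonneg_vec (y' t)"
  proof (intro allI impI)
    fix u :: real assume "u \<ge> 0"
    then have "a + c*u \<ge> 0" using a c by simp
    then show "nonneg_vec (y' u)" using ynn unfolding y'_def by blast
  qed
  moreover have "N' \<in> null_sets lborel" unfolding N'_def using null_affine[OF N c] .
  moreover have "\<forall>u. u \<ge> 0 \<and> u \<notin> N' \<longrightarrow>
           (p has_vector_derivative
              (lam + (R - mat 1) *v ((\<Sum>\<mu>\<in>S. s' \<mu> u *\<^sub>R \<mu>) - y' u))) (at u within {0..}) \<and>
           (\<Sum>\<mu>\<in>S. s' \<mu> u) = 1 \<and>
           (\<forall>i. y' u $ i \<le> (\<Sum>\<mu>\<in>S. s' \<mu> u * \<mu> $ i)) \<and>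
           (\<forall>i. p u $ i > 0 \<longrightarrow> y' u $ i = 0) \<and>
           (\<forall>\<mu>\<in>S. \<mu> \<notin> Sw R S w (p u) \<longrightarrow> s' \<mu> u = 0)"
  proof (intro allI impI)
    fix u :: real assume u: "u \<ge> 0 \<and> u \<notin> N'"
    define t where "t = a + c*u"
    have t0: "t \<ge> 0" using u a c unfolding t_def by simp
    have tN: "t \<notin> N" using u unfolding t_def N'_def by simp
    note Ht = H[OF conjI[OF t0 tN]]
    define D where "D = lam + (R - mat 1) *v ((\<Sum>\<mu>\<in>S. s \<mu> t *\<^sub>R \<mu>) - y t)"
    have f: "((\<lambda>u. a + c*u) has_vector_derivative c) (at u within {0..})"
    proof -
      have "((\<lambda>u. a + c*u) has_real_derivative c) (at u within {0..})"
        by (auto intro!: derivative_eq_intros)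
      then show ?thesis by (simp add: has_real_derivative_iff_has_vector_derivative)
    qed
    have g: "(q has_vector_derivative D) (at ((\<lambda>u. a + c*u) u) within (\<lambda>u. a + c*u) ` {0..})"
      using Ht[THEN conjunct1] unfolding D_def t_def
      by (rule has_vector_derivative_within_subset) (use a c in auto)
    have "((q \<circ> (\<lambda>u. a + c*u)) has_vector_derivative (c *\<^sub>R D)) (at u within {0..})"
      by (rule vector_diff_chain_within[OF f g])
    then have h1: "((\<lambda>x. q (a + c*x)) has_vector_derivative c *\<^sub>R D) (at u within {0..})"
      by (simp add: o_def)
    have "((\<lambda>x. (1/c) *\<^sub>R q (a + c*x)) has_vector_derivative ((1/c) *\<^sub>R (c *\<^sub>R D) + 0 *\<^sub>R q (a + c*u))) (at u within {0..})"
      by (rule has_vector_derivative_scaleR[OF DERIV_const h1])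
    then have "(p has_vector_derivative D) (at u within {0..})"
      using c unfolding p_def by (simp add: o_def)
    moreover have "Sw R S w (p u) = Sw R S w (q t)"
      unfolding p_def t_def using Sw_scale[of "1/c"] c by simp
    moreover have "\<And>i. p u $ i > 0 \<longleftrightarrow> q t $ i > 0"
      unfolding p_def t_def using c by (simp add: zero_less_divide_iff)
    ultimately show "(p has_vector_derivative
              (lam + (R - mat 1) *v ((\<Sum>\<mu>\<in>S. s' \<mu> u *\<^sub>R \<mu>) - y' u))) (at u within {0..}) \<and>
           (\<Sum>\<mu>\<in>S. s' \<mu> u) = 1 \<and>
           (\<forall>i. y' u $ i \<le> (\<Sum>\<mu>\<in>S. s' \<mu> u * \<mu> $ i)) \<and>
           (\<forall>i. p u $ i > 0 \<longrightarrow> y' u $ i = 0) \<and>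
           (\<forall>\<mu>\<in>S. \<mu> \<notin> Sw R S w (p u) \<longrightarrow> s' \<mu> u = 0)"
      using Ht unfolding s'_def y'_def D_def t_def by auto
  qed
  ultimately show ?thesis unfolding fluid_solution_def p_def[symmetric] by blast
qed


primrec wproc :: "real^'n^'n \<Rightarrow> (real^'n) set \<Rightarrow> real^'n \<Rightarrow> (nat \<Rightarrow> real^'n) \<Rightarrow> real^'n \<Rightarrow> nat \<Rightarrow> real^'n" where
  "wproc R S w A x0 0 = x0"
| "wproc R S w A x0 (Suc t) = wproc R S w A x0 t + A t +
     (R - mat 1) *v vmin (SOME \<mu>. \<mu> \<in> Sw R S w (wproc R S w A x0 t)) (wproc R S w A x0 t)"

lemma Sw_ne:
  assumes "finite S" "S \<noteq> {}"
  shows "\<exists>\<mu>. \<mu> \<in> Sw R S w x"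
proof -
  define f where "f = (\<lambda>\<mu>. x \<bullet> (diagm w *v ((mat 1 - R) *v \<mu>)))"
  have "Max (f ` S) \<in> f ` S" using assms by (intro Max_in) auto
  then obtain \<mu> where m: "\<mu> \<in> S" "f \<mu> = Max (f ` S)" by auto
  have "\<forall>\<nu>\<in>S. f \<nu> \<le> f \<mu>" using m assms by (simp add: Max_ge)
  then have "\<mu> \<in> Sw R S w x" using m unfolding Sw_def f_def by auto
  then show ?thesis by blast
qed

lemma wproc_ok:
  assumes "finite S" "S \<noteq> {}"
  shows "wmw_process R S w A (wproc R S w A x0)"
  unfolding wmw_process_def
proof
  fix t
  let ?x = "wproc R S w A x0 t"
  have "(SOME \<mu>. \<mu> \<in> Sw R S w ?x) \<in> Sw R S w ?x"
    using Sw_ne[OF assms] by (rule someI_ex)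
  then show "\<exists>\<mu>\<in>Sw R S w ?x. wproc R S w A x0 (Suc t) = ?x + A t + (R - mat 1) *v vmin \<mu> ?x"
    by auto
qed

lemma maxdev_const: "maxdev (\<lambda>_. lam) lam x = 0"
  unfolding maxdev_def by (rule Max_eqI) (auto intro: finite_subset[of _ "{0}"])

lemma maxdev_zero: "maxdev A lam 0 = 0"
  unfolding maxdev_def by simp

lemma maxdev_mono:
  assumes "x \<le> y"
  shows "maxdev A lam x \<le> maxdev A lam y"
proof -
  have fin: "finite {norm (\<Sum>\<tau>\<le>t. A \<tau> - lam) | t::nat. real t < y}"
  proof -
    have "{t::nat. real t < y} \<subseteq> {..nat \<lceil>y\<rceil>}" by (auto, linarith)
    then have "finite {t::nat. real t < y}" using finite_subset by blast
    then have "finite ((\<lambda>t. norm (\<Sum>\<tau>\<le>t. A \<tau> - lam)) ` {t::nat. real t < y})" by simp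
    moreover have "(\<lambda>t. norm (\<Sum>\<tau>\<le>t. A \<tau> - lam)) ` {t::nat. real t < y} = {norm (\<Sum>\<tau>\<le>t. A \<tau> - lam) | t::nat. real t < y}"
      by auto
    ultimately show ?thesis by simp
  qed
  have sub: "insert 0 {norm (\<Sum>\<tau>\<le>t. A \<tau> - lam) | t::nat. real t < x} \<subseteq> insert 0 {norm (\<Sum>\<tau>\<le>t. A \<tau> - lam) | t::nat. real t < y}"
    using assms by auto
  show ?thesis unfolding maxdev_def
    by (rule Max_mono[OF sub]) (use fin in auto)
qed

lemma fluid_lip:
  assumes net: "network R S" and Sne: "S \<noteq> {}" and sc: "sensitivity_const R S w C"
    and lamnn: "nonneg_vec lam" and fs: "fluid_solution R S w lam q" and s0: "s \<ge> 0" and d: "\<delta> > 0"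
  shows "norm (q (s + \<delta>) - q s) \<le> \<delta> * (\<bar>C\<bar> * (1 + norm lam) + norm lam + onorm ((*v) (R - mat 1)) * (\<Sum>\<mu>\<in>S. norm \<mu>))"
proof -
  have finS: "finite S" and Snn: "\<forall>\<mu>\<in>S. nonneg_vec \<mu>" using net unfolding network_def by auto
  define p where "p = (\<lambda>u. (1/\<delta>) *\<^sub>R q (s + \<delta>*u))"
  have fp: "fluid_solution R S w lam p" unfolding p_def by (rule fluid_affine[OF fs s0 d])
  define x0 where "x0 = p 0"
  define Q' where "Q' = wproc R S w (\<lambda>_. lam) x0"
  have wm: "wmw_process R S w (\<lambda>_. lam) Q'" unfolding Q'_def by (rule wproc_ok[OF finS Sne])
  have "\<forall>k::nat. norm (Q' k - p (real k)) \<le> C * (1 + norm lam + maxdev (\<lambda>_. lam) lam (real k))"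
    using sc[unfolded sensitivity_const_def, rule_format, of "\<lambda>_. lam" Q' lam p] wm lamnn fp
    unfolding Q'_def x0_def by simp
  then have b1: "norm (Q' 1 - p 1) \<le> C * (1 + norm lam)"
    using maxdev_const[of lam] by (metis add.right_neutral of_nat_1)
  have b1': "norm (Q' 1 - p 1) \<le> \<bar>C\<bar> * (1 + norm lam)"
    by (rule order.trans[OF b1]) (simp add: mult_right_mono)
  define \<mu> where "\<mu> = (SOME \<mu>. \<mu> \<in> Sw R S w x0)"
  have \<mu>S: "\<mu> \<in> Sw R S w x0" unfolding \<mu>_def using Sw_ne[OF finS Sne] by (rule someI_ex)
  then have \<mu>S': "\<mu> \<in> S" unfolding Sw_def by auto
  have Q1: "Q' 1 = x0 + lam + (R - mat 1) *v vmin \<mu> x0" unfolding Q'_def \<mu>_def by simp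
  have x0nn: "nonneg_vec x0"
  proof -
    have "nonneg_vec (q s)" using fs s0 unfolding fluid_solution_def by auto
    then show ?thesis unfolding x0_def p_def nonneg_vec_def using d by simp
  qed
  have "norm (vmin \<mu> x0) \<le> norm \<mu>"
  proof (rule norm_le_componentwise_cart)
    fix i
    have "0 \<le> \<mu> $ i" using Snn \<mu>S' unfolding nonneg_vec_def by auto
    moreover have "0 \<le> x0 $ i" using x0nn unfolding nonneg_vec_def by auto
    ultimately show "norm (vmin \<mu> x0 $ i) \<le> norm (\<mu> $ i)" unfolding vmin_def by auto
  qed
  also have "\<dots> \<le> (\<Sum>\<mu>\<in>S. norm \<mu>)" using \<mu>S' finS by (intro member_le_sum) auto
  finally have nv: "norm (vmin \<mu> x0) \<le> (\<Sum>\<mu>\<in>S. norm \<mu>)" .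
  define B where "B = onorm ((*v) (R - mat 1))"
  have B0: "0 \<le> B" unfolding B_def by (rule onorm_pos_le) simp
  have "norm ((R - mat 1) *v vmin \<mu> x0) \<le> B * norm (vmin \<mu> x0)"
    unfolding B_def by (rule onorm) simp
  also have "\<dots> \<le> B * (\<Sum>\<mu>\<in>S. norm \<mu>)" by (rule mult_left_mono[OF nv B0])
  finally have b2: "norm ((R - mat 1) *v vmin \<mu> x0) \<le> B * (\<Sum>\<mu>\<in>S. norm \<mu>)" .
  have "norm (Q' 1 - x0) \<le> norm lam + B * (\<Sum>\<mu>\<in>S. norm \<mu>)"
    using b2 Q1 norm_triangle_ineq[of lam "(R - mat 1) *v vmin \<mu> x0"] by (simp add: add.assoc)
  moreover have "norm (p 1 - p 0) \<le> norm (p 1 - Q' 1) + norm (Q' 1 - x0)"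
    unfolding x0_def by (rule norm_diff_triangle_ineq[THEN order.trans[rotated]]) (simp add: norm_diff_triangle_le)
  ultimately have b3: "norm (p 1 - p 0) \<le> \<bar>C\<bar> * (1 + norm lam) + norm lam + B * (\<Sum>\<mu>\<in>S. norm \<mu>)"
    using b1' by (simp add: norm_minus_commute)
  have "p 1 - p 0 = (1/\<delta>) *\<^sub>R (q (s + \<delta>) - q s)" unfolding p_def by (simp add: scaleR_diff_right)
  then have "norm (p 1 - p 0) = norm (q (s + \<delta>) - q s) / \<delta>" using d by simp
  with b3 d show ?thesis unfolding B_def by (simp add: divide_le_eq mult.commute)
qed


theorem corollary1:
  fixes R :: "real^'n^'n" and S :: "(real^'n) set" and w :: "real^'n" and C :: real
    and A :: "nat \<Rightarrow> real^'n" and q0 lam :: "real^'n" and q :: "real \<Rightarrow> real^'n" and T :: real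
  assumes "network R S"
    and "\<forall>i. 0 < w $ i"
    and "sensitivity_const R S w C"
    and "\<forall>t. nonneg_vec (A t)"
    and "nonneg_vec q0"
    and "nonneg_vec lam"
    and "fluid_solution R S w lam q"
    and "q 0 = q0"
    and "T > 0"
  shows "\<exists>K. \<forall>r>0. \<forall>Q. wmw_process R S w A Q \<and> Q 0 = r *\<^sub>R q0 \<longrightarrow>
           (\<forall>t\<in>{0..T}. norm (Q (nat \<lfloor>r * t\<rfloor>) /\<^sub>R r - q t)
                          \<le> C / r * maxdev A lam (r * T) + K / r)"
proof (cases "S = {}")
  case True
  show ?thesis
  proof (intro exI[of _ 0] allI impI)
    fix r :: real and Q assume "wmw_process R S w A Q \<and> Q 0 = r *\<^sub>R q0"
    then show "\<forall>t\<in>{0..T}. norm (Q (nat \<lfloor>r * t\<rfloor>) /\<^sub>R r - q t) \<le> C / r * maxdev A lam (r * T) + 0 / r"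
      using True unfolding wmw_process_def Sw_def by auto
  qed
next
  case Sne: False
  note net = assms(1) and sc = assms(3) and Ann = assms(4) and lamnn = assms(6) and fs = assms(7)
  define L where "L = \<bar>C\<bar> * (1 + norm lam) + norm lam + onorm ((*v) (R - mat 1)) * (\<Sum>\<mu>\<in>S. norm \<mu>)"
  have L0: "0 \<le> L" unfolding L_def
    by (intro add_nonneg_nonneg mult_nonneg_nonneg onorm_pos_le sum_nonneg) auto
  have lip: "\<And>s \<delta>. s \<ge> 0 \<Longrightarrow> \<delta> > 0 \<Longrightarrow> norm (q (s + \<delta>) - q s) \<le> \<delta> * L"
    unfolding L_def by (rule fluid_lip[OF net Sne sc lamnn fs])
  show ?thesis
  proof (intro exI[of _ "\<bar>C\<bar> * (1 + norm lam) + L"] allI impI ballI)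
    fix r :: real and Q t
    assume r: "r > 0" and QQ: "wmw_process R S w A Q \<and> Q 0 = r *\<^sub>R q0" and t: "t \<in> {0..T}"
    define p where "p = (\<lambda>u. (1/(1/r)) *\<^sub>R q (0 + (1/r)*u))"
    have fp: "fluid_solution R S w lam p" unfolding p_def by (rule fluid_affine[OF fs]) (use r in auto)
    have pk: "\<And>u. p u = r *\<^sub>R q (u / r)" unfolding p_def by simp
    have p0: "p 0 = Q 0" using QQ assms(8) pk[of 0] by simp
    have sens: "\<forall>k::nat. norm (Q k - p (real k)) \<le> C * (1 + norm lam + maxdev A lam (real k))"
      using sc[unfolded sensitivity_const_def, rule_format, of A Q lam p] Ann QQ lamnn fp p0 by simp
    have "0 \<le> C * (1 + norm lam)"
      using sens[rule_format, of 0] maxdev_zero[of A lam] by (metis norm_ge_zero of_nat_0 add.right_neutral order.trans)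
    then have C0: "C \<ge> 0"
      by (metis add_pos_nonneg norm_ge_zero zero_less_one zero_le_mult_iff linorder_not_less order.strict_iff_not)
    define k where "k = nat \<lfloor>r * t\<rfloor>"
    have rt0: "0 \<le> r * t" using r t by simp
    have kle: "real k \<le> r * t" unfolding k_def using rt0 by linarith
    have kgt: "r * t < real k + 1" unfolding k_def using rt0 by linarith
    have kT: "real k \<le> r * T" using kle r t by (smt (verit, best) atLeastAtMost_iff mult_left_mono)
    have e1: "norm (Q k /\<^sub>R r - q (real k / r)) \<le> C / r * (1 + norm lam + maxdev A lam (r * T))"
    proof -
      have "Q k /\<^sub>R r - q (real k / r) = (1/r) *\<^sub>R (Q k - p (real k))"
        using r by (simp add: pk scaleR_diff_right inverse_eq_divide)
      then have "norm (Q k /\<^sub>R r - q (real k / r)) = norm (Q k - p (real k)) / r" using r by simp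
      also have "\<dots> \<le> C * (1 + norm lam + maxdev A lam (real k)) / r"
        using sens r by (simp add: divide_right_mono)
      also have "\<dots> \<le> C * (1 + norm lam + maxdev A lam (r * T)) / r"
        using maxdev_mono[OF kT, of A lam] C0 r by (simp add: divide_right_mono mult_left_mono)
      finally show ?thesis by simp
    qed
    have e2: "norm (q (real k / r) - q t) \<le> L / r"
    proof (cases "t = real k / r")
      case True then show ?thesis using L0 r by simp
    next
      case False
      define \<delta> where "\<delta> = t - real k / r"
      have "real k / r \<le> t" using kle r by (simp add: divide_le_eq mult.commute)
      then have d0: "\<delta> > 0" using False unfolding \<delta>_def by simp
      have "(r*t - real k) / r < 1 / r" using kgt r by (intro divide_strict_right_mono) auto
      moreover have "(r*t - real k) / r = t - real k / r" using r by (simp add: diff_divide_distrib)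
      ultimately have d1: "\<delta> < 1 / r" unfolding \<delta>_def by simp
      have "norm (q (real k / r + \<delta>) - q (real k / r)) \<le> \<delta> * L"
        by (rule lip) (use r d0 in auto)
      also have "\<dots> \<le> (1/r) * L" using d1 L0 by (intro mult_right_mono) auto
      finally show ?thesis unfolding \<delta>_def by (simp add: norm_minus_commute)
    qed
    have "norm (Q k /\<^sub>R r - q t) \<le> norm (Q k /\<^sub>R r - q (real k / r)) + norm (q (real k / r) - q t)"
      by (rule norm_diff_triangle_le[OF order.refl order.refl])
    also have "\<dots> \<le> C / r * (1 + norm lam + maxdev A lam (r * T)) + L / r" using e1 e2 by simp
    also have "\<dots> = C / r * maxdev A lam (r * T) + (\<bar>C\<bar> * (1 + norm lam) + L) / r"
      using C0 r by (simp add: abs_of_nonneg add_divide_distrib distrib_left algebra_simps)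
    finally show "norm (Q (nat \<lfloor>r * t\<rfloor>) /\<^sub>R r - q t) \<le> C / r * maxdev A lam (r * T) + (\<bar>C\<bar> * (1 + norm lam) + L) / r"
      unfolding k_def .
  qed
qed

end
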